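(* Let $\pi$ be uniform on $\mathrm{PF}_n$ and $Z(\pi)=\#\{i:\pi_i=1\}$. Then for each fixed integer $j\ge0$, $P(Z(\pi)=1+j)\to\frac{1}{e\,j!}$ as $n\to\infty$.
   Context: A parking function of length $n$ is a sequence $(\pi_1,\dots,\pi_n)$ with $1\le\pi_i\le n$ such that $\#\{t:\pi_t\le i\}\ge i$ for all $1\le i\le n$; $\mathrm{PF}_n$ denotes the set of these. *)

theory Defs
  imports "HOL-Analysis.Analysis" "HOL-Library.FuncSet"
begin

definition parking_functions :: "nat \<Rightarrow> (nat \<Rightarrow> nat) set" where
  "parking_functions n =
     {p \<in> {1..n} \<rightarrow>\<^sub>E {1..n}. \<forall>i\<in>{1..n}. card {t \<in> {1..n}. p t \<le> i} \<ge> i}"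

definition num_ones :: "nat \<Rightarrow> (nat \<Rightarrow> nat) \<Rightarrow> nat" where
  "num_ones n p = card {i \<in> {1..n}. p i = 1}"

definition prob_ones :: "nat \<Rightarrow> nat \<Rightarrow> real" where
  "prob_ones n k = real (card {p \<in> parking_functions n. num_ones n p = k})
                   / real (card (parking_functions n))"

end

theory Submission
  imports Defs "HOL-Real_Asymp.Real_Asymp"
begin

definition G :: "'a set \<Rightarrow> nat \<Rightarrow> ('a \<Rightarrow> nat) set" where
  "G D a = {q \<in> D \<rightarrow>\<^sub>E {1..card D + a}. \<forall>i\<in>{1..card D + a}. i \<le> card {t\<in>D. q t \<le> i} + a}"

lemma split_card:
  fixes q :: "'a \<Rightarrow> nat"
  assumes fin: "finite D" and SD: "S \<subseteq> D"
    and h1: "\<forall>t\<in>S. q t = 1" and h2: "\<forall>t\<in>D-S. q t \<noteq> 1 \<and> q t \<ge> 1"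
  shows "card {t\<in>D. q t \<le> Suc i} = card S + card {t\<in>D - S. q t - 1 \<le> i}"
proof -
  have "{t\<in>D. q t \<le> Suc i} = S \<union> {t\<in>D - S. q t - 1 \<le> i}"
    using h1 h2 SD by force
  moreover have "finite S" using fin SD finite_subset by blast
  moreover have "finite {t\<in>D - S. q t - 1 \<le> i}" using fin by simp
  moreover have "S \<inter> {t\<in>D - S. q t - 1 \<le> i} = {}" by auto
  ultimately show ?thesis by (metis (no_types, lifting) card_Un_disjoint)
qed

lemma fiber_card:
  fixes D :: "'a set"
  assumes fin: "finite D" and SD: "S \<subseteq> D" and ac: "1 \<le> a + card S"
  shows "card {q \<in> G D a. {t\<in>D. q t = 1} = S} = card (G (D - S) (a + card S - 1))"
proof -
  define m where "m = card D"
  define c where "c = card S"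
  define b where "b = a + c - 1"
  have cm: "c \<le> m" using card_mono[OF fin SD] by (simp add: m_def c_def)
  have cDS: "card (D - S) = m - c"
    using card_Diff_subset[OF finite_subset[OF SD fin] SD] by (simp add: m_def c_def)
  have rng: "card (D - S) + b = m + a - 1" using cDS cm ac by (simp add: b_def c_def)
  have bc: "b + 1 = a + c" using ac by (simp add: b_def c_def)
  define f :: "('a \<Rightarrow> nat) \<Rightarrow> 'a \<Rightarrow> nat" where "f = (\<lambda>r t. if t \<in> S then 1 else if t \<in> D then Suc (r t) else undefined)"
  define g :: "('a \<Rightarrow> nat) \<Rightarrow> 'a \<Rightarrow> nat" where "g = (\<lambda>q t. if t \<in> D - S then q t - 1 else undefined)"
  have GDS: "G (D - S) b = {r \<in> (D - S) \<rightarrow>\<^sub>E {1..m + a - 1}. \<forall>i\<in>{1..m + a - 1}. i \<le> card {t\<in>D - S. r t \<le> i} + b}"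
    unfolding G_def rng ..
  have GD: "G D a = {q \<in> D \<rightarrow>\<^sub>E {1..m + a}. \<forall>i\<in>{1..m + a}. i \<le> card {t\<in>D. q t \<le> i} + a}"
    unfolding G_def m_def ..
  have "bij_betw f (G (D - S) b) {q \<in> G D a. {t\<in>D. q t = 1} = S}"
  proof (rule bij_betwI[where g = g])
    show "f \<in> G (D - S) b \<rightarrow> {q \<in> G D a. {t\<in>D. q t = 1} = S}"
    proof
      fix r assume "r \<in> G (D - S) b"
      then have r1: "r \<in> (D - S) \<rightarrow>\<^sub>E {1..m + a - 1}"
        and r2: "\<forall>i\<in>{1..m + a - 1}. i \<le> card {t\<in>D - S. r t \<le> i} + b"
        unfolding GDS by auto
      have m1: "S \<noteq> {} \<Longrightarrow> 1 \<le> m" using fin SD m_def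
        by (metis One_nat_def Suc_leI card_gt_0_iff finite_subset subset_empty)
      have rge: "\<And>t. t \<in> D - S \<Longrightarrow> r t \<in> {1..m + a - 1}" using r1 PiE_mem by blast
      have rge1: "\<And>t. t \<in> D \<Longrightarrow> t \<notin> S \<Longrightarrow> 0 < r t" using rge by fastforce
      have fr1: "f r \<in> D \<rightarrow>\<^sub>E {1..m + a}"
      proof (rule PiE_I)
        fix t assume t: "t \<in> D"
        show "f r t \<in> {1..m + a}"
        proof (cases "t \<in> S")
          case True then have "1 \<le> m" using m1 by auto
          then show ?thesis using True by (simp add: f_def)
        next
          case False then have "r t \<in> {1..m + a - 1}" using rge t by blast
          then show ?thesis using False t by (auto simp: f_def)
        qed
      next
        fix t assume "t \<notin> D" then show "f r t = undefined" using SD by (auto simp: f_def)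
      qed
      have ones: "{t\<in>D. f r t = 1} = S"
      proof (rule set_eqI)
        fix t show "t \<in> {t\<in>D. f r t = 1} \<longleftrightarrow> t \<in> S"
          using rge[of t] SD by (cases "t \<in> S"; cases "t \<in> D") (auto simp: f_def)
      qed
      have fr2: "i \<le> card {t\<in>D. f r t \<le> i} + a" if i: "i \<in> {1..m + a}" for i
      proof -
        obtain i' where ii: "i = Suc i'" using i by (cases i) auto
        have sp: "card {t\<in>D. f r t \<le> Suc i'} = c + card {t\<in>D - S. r t \<le> i'}"
        proof -
          have "card {t\<in>D. f r t \<le> Suc i'} = card S + card {t\<in>D - S. f r t - 1 \<le> i'}"
            apply (rule split_card[OF fin SD])
            using rge1 unfolding f_def by auto
          moreover have "{t\<in>D - S. f r t - 1 \<le> i'} = {t\<in>D - S. r t \<le> i'}"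
            unfolding f_def by auto
          ultimately show ?thesis by (simp add: c_def)
        qed
        show ?thesis
        proof (cases "i' = 0")
          case True then show ?thesis using ii sp ac c_def by simp
        next
          case False
          then have "i' \<in> {1..m + a - 1}" using i ii by auto
          then have "i' \<le> card {t\<in>D - S. r t \<le> i'} + b" using r2 by blast
          then show ?thesis using ii sp bc by simp
        qed
      qed
      show "f r \<in> {q \<in> G D a. {t\<in>D. q t = 1} = S}"
        unfolding GD using fr1 fr2 ones by blast
    qed
    show "g \<in> {q \<in> G D a. {t\<in>D. q t = 1} = S} \<rightarrow> G (D - S) b"
    proof
      fix q assume "q \<in> {q \<in> G D a. {t\<in>D. q t = 1} = S}"
      then have q1: "q \<in> D \<rightarrow>\<^sub>E {1..m + a}"
        and q2: "\<forall>i\<in>{1..m + a}. i \<le> card {t\<in>D. q t \<le> i} + a"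
        and q3: "{t\<in>D. q t = 1} = S"
        unfolding GD by auto
      have qS: "\<forall>t\<in>S. q t = 1" using q3 by auto
      have qr: "\<And>t. t \<in> D \<Longrightarrow> q t \<in> {1..m + a}" using q1 PiE_mem by blast
      have qDS: "\<forall>t\<in>D-S. q t \<noteq> 1 \<and> q t \<ge> 1" using q3 qr by auto
      have g1: "g q \<in> (D - S) \<rightarrow>\<^sub>E {1..m + a - 1}"
      proof (rule PiE_I)
        fix t assume t: "t \<in> D - S"
        then have "q t \<in> {1..m + a}" "q t \<noteq> 1" using qr qDS by auto
        then show "g q t \<in> {1..m + a - 1}" using t by (auto simp: g_def)
      next
        fix t assume "t \<notin> D - S" then show "g q t = undefined" by (auto simp: g_def)
      qed
      have g2: "i \<le> card {t\<in>D - S. g q t \<le> i} + b" if i: "i \<in> {1..m + a - 1}" for i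
      proof -
        have "card {t\<in>D. q t \<le> Suc i} = card S + card {t\<in>D - S. q t - 1 \<le> i}"
          by (rule split_card[OF fin SD qS qDS])
        moreover have "{t\<in>D - S. q t - 1 \<le> i} = {t\<in>D - S. g q t \<le> i}"
          unfolding g_def by auto
        moreover have "Suc i \<le> card {t\<in>D. q t \<le> Suc i} + a" using q2 i by auto
        ultimately show ?thesis using bc c_def by simp
      qed
      show "g q \<in> G (D - S) b" unfolding GDS using g1 g2 by blast
    qed
    show "g (f r) = r" if "r \<in> G (D - S) b" for r
    proof -
      have r1: "r \<in> (D - S) \<rightarrow>\<^sub>E {1..m + a - 1}" using that unfolding GDS by auto
      show ?thesis
      proof
        fix t show "g (f r) t = r t"
        proof (cases "t \<in> D - S")
          case True then show ?thesis by (simp add: f_def g_def)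
        next
          case False then show ?thesis using PiE_arb[OF r1 False] by (auto simp: g_def)
        qed
      qed
    qed
    show "f (g q) = q" if "q \<in> {q \<in> G D a. {t\<in>D. q t = 1} = S}" for q
    proof -
      have q1: "q \<in> D \<rightarrow>\<^sub>E {1..m + a}" and q3: "{t\<in>D. q t = 1} = S"
        using that unfolding GD by auto
      show ?thesis
      proof
        fix t show "f (g q) t = q t"
        proof (cases "t \<in> D")
          case True
          then have "q t \<in> {1..m + a}" using q1 PiE_mem by blast
          then show ?thesis using q3 True by (auto simp: f_def g_def)
        next
          case False then show ?thesis using PiE_arb[OF q1 False] SD by (auto simp: f_def g_def)
        qed
      qed
    qed
  qed
  then have "card (G (D - S) b) = card {q \<in> G D a. {t\<in>D. q t = 1} = S}"
    by (rule bij_betw_same_card)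
  then show ?thesis by (simp add: b_def c_def)
qed


definition H :: "nat \<Rightarrow> nat \<Rightarrow> nat" where
  "H m a = (if m = 0 then 1 else (a + 1) * (m + a + 1) ^ (m - 1))"

lemma binom_sum1: "(\<Sum>k\<le>m. (m choose k) * x ^ (m - k)) = (x + 1 :: nat) ^ m"
  using binomial_ring[of "1::nat" x m] by (simp add: add.commute)

lemma binom_sum2: "(\<Sum>k\<le>Suc p. (Suc p choose k) * k * x ^ (Suc p - k)) = Suc p * (x + 1 :: nat) ^ p"
proof -
  have "(\<Sum>k\<le>Suc p. (Suc p choose k) * k * x ^ (Suc p - k))
      = (\<Sum>k\<le>p. (Suc p choose Suc k) * Suc k * x ^ (p - k))"
    by (subst sum.atMost_Suc_shift) simp
  also have "\<dots> = (\<Sum>k\<le>p. Suc p * ((p choose k) * x ^ (p - k)))"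
  proof (rule sum.cong)
    fix k
    have e: "(Suc p choose Suc k) * Suc k = Suc p * (p choose k)"
      by (metis Suc_times_binomial mult.commute)
    show "(Suc p choose Suc k) * Suc k * x ^ (p - k) = Suc p * ((p choose k) * x ^ (p - k))"
      by (simp only: e mult.assoc)
  qed simp
  also have "\<dots> = Suc p * (x + 1) ^ p"
    by (simp only: sum_distrib_left[symmetric] binom_sum1)
  finally show ?thesis .
qed

lemma arith_id:
  assumes m: "1 \<le> m"
  shows "(\<Sum>c\<le>m. (m choose c) * (if 1 \<le> a + c then H (m - c) (a + c - 1) else 0)) = H m a"
proof -
  obtain p where p: "m = Suc p" using m by (cases m) auto
  define x where "x = m + a"
  have x0: "0 < x" using m x_def by simp
  have T: "(if 1 \<le> a + c then H (m - c) (a + c - 1) else 0) =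
           (if c = m then 1 else (a + c) * x ^ (m - c - 1))" if c: "c \<le> m" for c
  proof (cases "c = m")
    case True then show ?thesis using m by (simp add: H_def)
  next
    case False
    then have cm: "c < m" using c by simp
    show ?thesis
    proof (cases "1 \<le> a + c")
      case True
      have e2: "m - c + (a + c - 1) + 1 = x" using cm True x_def by simp
      have e1: "a + c - 1 + 1 = a + c" using True by simp
      have h: "H (m - c) (a + c - 1) = (a + c - 1 + 1) * (m - c + (a + c - 1) + 1) ^ (m - c - 1)"
        using cm by (simp add: H_def)
      have h2: "H (m - c) (a + c - 1) = (a + c) * x ^ (m - c - 1)"
        by (simp only: h e1 e2)
      show ?thesis using True cm h2 by simp
    next
      case False then show ?thesis using cm by simp
    qed
  qed
  have "x * (\<Sum>c\<le>m. (m choose c) * (if 1 \<le> a + c then H (m - c) (a + c - 1) else 0))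
      = (\<Sum>c\<le>m. x * ((m choose c) * (if c = m then 1 else (a + c) * x ^ (m - c - 1))))"
    unfolding sum_distrib_left by (rule sum.cong[OF refl], subst T, auto)
  also have "\<dots> = (\<Sum>c\<le>m. (m choose c) * (a + c) * x ^ (m - c))"
  proof (rule sum.cong)
    fix c assume "c \<in> {..m}"
    then have c: "c \<le> m" by simp
    show "x * ((m choose c) * (if c = m then 1 else (a + c) * x ^ (m - c - 1))) =
          (m choose c) * (a + c) * x ^ (m - c)"
    proof (cases "c = m")
      case True then show ?thesis using x_def by simp
    next
      case False
      then have "m - c = Suc (m - c - 1)" using c by simp
      then have "x ^ (m - c) = x * x ^ (m - c - 1)" by (metis power_Suc)
      then show ?thesis using False by (simp add: mult.commute mult.left_commute)
    qed
  qed simp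
  also have "\<dots> = a * (\<Sum>c\<le>m. (m choose c) * x ^ (m - c)) + (\<Sum>c\<le>m. (m choose c) * c * x ^ (m - c))"
    by (simp add: sum_distrib_left sum.distrib[symmetric] algebra_simps)
  also have "\<dots> = a * (x + 1) ^ m + m * (x + 1) ^ p"
    using binom_sum1[of m x] binom_sum2[of p x] p by simp
  also have "\<dots> = (a * (x + 1) + m) * (x + 1) ^ p"
    using p by (simp add: algebra_simps)
  also have "\<dots> = x * ((a + 1) * (m + a + 1) ^ (m - 1))"
    using p x_def by (simp add: algebra_simps)
  also have "\<dots> = x * H m a" using m by (simp add: H_def)
  finally show ?thesis using x0 by simp
qed

lemma sum_Pow_card:
  assumes "finite D"
  shows "(\<Sum>S\<in>Pow D. h (card S)) = (\<Sum>c\<le>card D. (card D choose c) * h c)"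
proof -
  have "(\<Sum>S\<in>Pow D. h (card S)) = (\<Sum>c\<le>card D. \<Sum>S\<in>{S. S \<in> Pow D \<and> card S = c}. h (card S))"
    by (rule sum.group[symmetric]) (use assms card_mono in auto)
  also have "\<dots> = (\<Sum>c\<le>card D. (card D choose c) * h c)"
  proof (rule sum.cong)
    fix c
    have "(\<Sum>S\<in>{S. S \<in> Pow D \<and> card S = c}. h (card S)) = (\<Sum>S\<in>{S. S \<subseteq> D \<and> card S = c}. h c)"
      by (rule sum.cong) auto
    also have "\<dots> = (card D choose c) * h c" using n_subsets[OF assms] by simp
    finally show "(\<Sum>S\<in>{S. S \<in> Pow D \<and> card S = c}. h (card S)) = (card D choose c) * h c" .
  qed simp
  finally show ?thesis .
qed

lemma finite_G: "finite D \<Longrightarrow> finite (G D a)"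
  unfolding G_def by (rule finite_subset[of _ "D \<rightarrow>\<^sub>E {1..card D + a}"]) (auto intro: finite_PiE)

lemma G_partition:
  assumes "finite D"
  shows "card (G D a) = (\<Sum>S\<in>Pow D. card {q \<in> G D a. {t\<in>D. q t = 1} = S})"
proof -
  have "G D a = (\<Union>S\<in>Pow D. {q \<in> G D a. {t\<in>D. q t = 1} = S})" by auto
  then have "card (G D a) = card (\<Union>S\<in>Pow D. {q \<in> G D a. {t\<in>D. q t = 1} = S})" by simp
  also have "\<dots> = (\<Sum>S\<in>Pow D. card {q \<in> G D a. {t\<in>D. q t = 1} = S})"
  proof (rule card_UN_disjoint)
    show "\<forall>S\<in>Pow D. finite {q \<in> G D a. {t\<in>D. q t = 1} = S}"
      using finite_G[OF assms, of a] by auto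
  qed (use assms in auto)
  finally show ?thesis .
qed

lemma fiber_empty0:
  assumes "finite D" "D \<noteq> {}"
  shows "{q \<in> G D 0. {t\<in>D. q t = 1} = {}} = {}"
proof (rule ccontr)
  assume "{q \<in> G D 0. {t\<in>D. q t = 1} = {}} \<noteq> {}"
  then obtain q where q: "q \<in> G D 0" and o: "{t\<in>D. q t = 1} = {}" by blast
  have q1: "q \<in> D \<rightarrow>\<^sub>E {1..card D}" and q2: "\<forall>i\<in>{1..card D}. i \<le> card {t\<in>D. q t \<le> i}"
    using q unfolding G_def by auto
  have "1 \<le> card D" using assms by (simp add: Suc_le_eq card_gt_0_iff)
  then have "1 \<le> card {t\<in>D. q t \<le> 1}" using q2 by auto
  moreover have "{t\<in>D. q t \<le> 1} = {}"
  proof -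
    have "\<And>t. t \<in> D \<Longrightarrow> q t \<ge> 1" using q1 PiE_mem by fastforce
    then show ?thesis using o by force
  qed
  ultimately show False by (metis card.empty not_one_le_zero)
qed

lemma card_G: "finite D \<Longrightarrow> card (G D a) = H (card D) a"
proof (induction "card D" arbitrary: D a rule: less_induct)
  case less
  show ?case
  proof (cases "D = {}")
    case True
    have "G D a = {\<lambda>x. undefined}" using True by (auto simp: G_def)
    then show ?thesis using True by (simp add: H_def)
  next
    case False
    have m1: "1 \<le> card D" using False less.prems by (simp add: Suc_le_eq card_gt_0_iff)
    show ?thesis
    proof (induction a rule: less_induct)
      fix a
      assume IHa: "\<And>a'. a' < a \<Longrightarrow> card (G D a') = H (card D) a'"
      have fib: "card {q \<in> G D a. {t\<in>D. q t = 1} = S} =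
          (if 1 \<le> a + card S then H (card D - card S) (a + card S - 1) else 0)"
        if S: "S \<in> Pow D" for S
      proof (cases "1 \<le> a + card S")
        case True
        have SD: "S \<subseteq> D" using S by simp
        have cDS: "card (D - S) = card D - card S"
          using card_Diff_subset[OF finite_subset[OF SD less.prems] SD] .
        have "card {q \<in> G D a. {t\<in>D. q t = 1} = S} = card (G (D - S) (a + card S - 1))"
          by (rule fiber_card[OF less.prems SD True])
        also have "\<dots> = H (card D - card S) (a + card S - 1)"
        proof (cases "S = {}")
          case True
          then have "a + card S - 1 < a" using \<open>1 \<le> a + card S\<close> by simp
          then show ?thesis using IHa True by simp
        next
          case False
          then have "card S > 0" using finite_subset[OF SD less.prems] by (simp add: card_gt_0_iff)
          then have "card (D - S) < card D" using cDS m1 by simp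
          then show ?thesis using less.hyps[of "D - S"] less.prems cDS by simp
        qed
        finally show ?thesis using True by simp
      next
        case False
        have fS: "finite S" using S finite_subset[of S D] less.prems by auto
        have "a = 0" "card S = 0" using False by auto
        then have a0: "a = 0" and S0: "S = {}" using fS by auto
        have "{q \<in> G D a. {t\<in>D. q t = 1} = S} = {}"
          by (simp only: a0 S0 fiber_empty0[OF less.prems \<open>D \<noteq> {}\<close>])
        then have "card {q \<in> G D a. {t\<in>D. q t = 1} = S} = 0" by (simp only: card.empty)
        then show ?thesis using False by simp
      qed
      have "card (G D a) = (\<Sum>S\<in>Pow D. card {q \<in> G D a. {t\<in>D. q t = 1} = S})"
        by (rule G_partition[OF less.prems])
      also have "\<dots> = (\<Sum>S\<in>Pow D. (\<lambda>c. if 1 \<le> a + c then H (card D - c) (a + c - 1) else 0) (card S))"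
      proof (rule sum.cong[OF refl])
        fix S assume S: "S \<in> Pow D"
        show "card {q \<in> G D a. {t\<in>D. q t = 1} = S} = (\<lambda>c. if 1 \<le> a + c then H (card D - c) (a + c - 1) else 0) (card S)"
          unfolding fib[OF S] by (rule refl)
      qed
      also have "\<dots> = (\<Sum>c\<le>card D. (card D choose c) * (if 1 \<le> a + c then H (card D - c) (a + c - 1) else 0))"
        by (rule sum_Pow_card[OF less.prems, of "\<lambda>c. if 1 \<le> a + c then H (card D - c) (a + c - 1) else 0"])
      also have "\<dots> = H (card D) a" by (rule arith_id[OF m1])
      finally show "card (G D a) = H (card D) a" .
    qed
  qed
qed


lemma PF_eq: "parking_functions n = G {1..n} 0"
  by (simp add: parking_functions_def G_def)

lemma count_k:
  assumes k: "1 \<le> k"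
  shows "card {p \<in> parking_functions n. num_ones n p = k} = (n choose k) * H (n - k) (k - 1)"
proof -
  define D where "D = {1..n}"
  have fD: "finite D" and cD: "card D = n" by (simp_all add: D_def)
  let ?F = "\<lambda>S. {q \<in> G D 0. {t\<in>D. q t = 1} = S}"
  have eq: "{p \<in> parking_functions n. num_ones n p = k} = (\<Union>S\<in>{S. S \<subseteq> D \<and> card S = k}. ?F S)"
    unfolding PF_eq num_ones_def D_def[symmetric] by auto
  have "card (\<Union>S\<in>{S. S \<subseteq> D \<and> card S = k}. ?F S) = (\<Sum>S\<in>{S. S \<subseteq> D \<and> card S = k}. card (?F S))"
  proof (rule card_UN_disjoint)
    show "finite {S. S \<subseteq> D \<and> card S = k}" using fD by simp
    show "\<forall>S\<in>{S. S \<subseteq> D \<and> card S = k}. finite (?F S)"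
      using finite_G[OF fD, of 0] by auto
  qed auto
  also have "\<dots> = (\<Sum>S\<in>{S. S \<subseteq> D \<and> card S = k}. H (n - k) (k - 1))"
  proof (rule sum.cong[OF refl])
    fix S assume "S \<in> {S. S \<subseteq> D \<and> card S = k}"
    then have SD: "S \<subseteq> D" and cS: "card S = k" by auto
    have "card (?F S) = card (G (D - S) (0 + card S - 1))"
      by (rule fiber_card[OF fD SD]) (use k cS in simp)
    also have "\<dots> = H (card (D - S)) (k - 1)"
      using card_G[of "D - S"] fD cS by simp
    also have "card (D - S) = n - k"
      using card_Diff_subset[OF finite_subset[OF SD fD] SD] cD cS by simp
    finally show "card (?F S) = H (n - k) (k - 1)" .
  qed
  also have "\<dots> = (n choose k) * H (n - k) (k - 1)"
    using n_subsets[OF fD, of k] cD by simp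
  finally show ?thesis using eq by simp
qed

lemma prob_formula:
  assumes n: "j + 2 \<le> n"
  shows "prob_ones n (1 + j) =
    real (Suc j) * (real (n choose Suc j) / real n ^ Suc j) * (real n / (real n + 1)) ^ (n - 1)"
proof -
  have c: "card {p \<in> parking_functions n. num_ones n p = 1 + j} = (n choose Suc j) * H (n - Suc j) j"
    using count_k[of "1 + j" n] by simp
  have t: "card (parking_functions n) = H n 0"
    using card_G[of "{1..n}" 0] by (simp add: PF_eq)
  have h1: "H (n - Suc j) j = Suc j * n ^ (n - j - 2)"
  proof -
    have "n - Suc j \<noteq> 0" "n - Suc j + j + 1 = n" "n - Suc j - 1 = n - j - 2" using n by auto
    then show ?thesis by (simp add: H_def)
  qed
  have h2: "H n 0 = (n + 1) ^ (n - 1)" using n by (simp add: H_def)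
  have pw: "real n ^ (n - j - 2) * real n ^ Suc j = real n ^ (n - 1)"
  proof -
    have "n - j - 2 + Suc j = n - 1" using n by simp
    then show ?thesis by (metis power_add)
  qed
  have n0: "real n > 0" using n by simp
  have "prob_ones n (1 + j) = real ((n choose Suc j) * (Suc j * n ^ (n - j - 2))) / real ((n + 1) ^ (n - 1))"
    unfolding prob_ones_def c t h1 h2 ..
  also have "\<dots> = real (Suc j) * (real (n choose Suc j) / real n ^ Suc j) * (real n ^ (n - 1) / (real n + 1) ^ (n - 1))"
    using n0 pw[symmetric] by (simp add: field_simps)
  also have "\<dots> = real (Suc j) * (real (n choose Suc j) / real n ^ Suc j) * (real n / (real n + 1)) ^ (n - 1)"
    by (simp add: power_divide)
  finally show ?thesis .
qed

lemma binom_lim: "(\<lambda>n. real (n choose k) / real n ^ k) \<longlonglongrightarrow> 1 / fact k"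
proof -
  have eq: "real (n choose k) / real n ^ k = (\<Prod>i\<in>{0..<k}. (real n - real k + 1 + real i) / real n) / fact k" for n
  proof -
    have "real (n choose k) = (\<Prod>i\<in>{0..<k}. real n - real k + 1 + real i) / fact k"
      by (simp add: binomial_gbinomial gbinomial_pochhammer' pochhammer_prod)
    moreover have "real n ^ k = (\<Prod>i\<in>{0..<k}. real n)" by simp
    ultimately show ?thesis by (simp add: prod_dividef)
  qed
  have "(\<lambda>n. (\<Prod>i\<in>{0..<k}. (real n - real k + 1 + real i) / real n)) \<longlonglongrightarrow> (\<Prod>i\<in>{0..<k}. (1::real))"
  proof (rule tendsto_prod)
    fix i show "(\<lambda>n. (real n - real k + 1 + real i) / real n) \<longlonglongrightarrow> 1" by real_asymp
  qed
  then have "(\<lambda>n. (\<Prod>i\<in>{0..<k}. (real n - real k + 1 + real i) / real n) / fact k) \<longlonglongrightarrow> 1 / fact k"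
    by (intro tendsto_divide tendsto_const) simp_all
  then show ?thesis unfolding eq .
qed

theorem mainTheorem12:
  fixes j :: nat
  shows "(\<lambda>n. prob_ones n (1 + j)) \<longlonglongrightarrow> 1 / (exp 1 * fact j)"
proof -
  have e: "(\<lambda>n. (real n / (real n + 1)) ^ (n - 1)) \<longlonglongrightarrow> exp (-1)" by real_asymp
  have L: "(\<lambda>n. real (Suc j) * (real (n choose Suc j) / real n ^ Suc j) * (real n / (real n + 1)) ^ (n - 1))
     \<longlonglongrightarrow> real (Suc j) * (1 / fact (Suc j)) * exp (-1)"
    by (intro tendsto_mult tendsto_const binom_lim e)
  have V: "real (Suc j) * (1 / fact (Suc j)) * exp (-1) = 1 / (exp 1 * fact j)"
  proof -
    have "real (Suc j) * (1 / fact (Suc j)) = (1 / fact j :: real)"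
      by (simp add: fact_Suc del: of_nat_Suc)
    then show ?thesis unfolding exp_minus by (simp only:) (simp add: divide_inverse mult.commute)
  qed
  have E: "\<forall>\<^sub>F n in sequentially. real (Suc j) * (real (n choose Suc j) / real n ^ Suc j) * (real n / (real n + 1)) ^ (n - 1)
      = prob_ones n (1 + j)"
    using eventually_ge_at_top[of "j + 2"] by eventually_elim (rule prob_formula[symmetric]; simp)
  show ?thesis using Lim_transform_eventually[OF L E] unfolding V .
qed

end
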